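(* Consider the discrete-time nonlinear system $x^+=AM(x)+Bu$ with (unknown) $A\in\mathbb{R}^{n\times N}$, $B\in\mathbb{R}^{n\times m}$, $M(x)=\begin{bmatrix}x\\ \mathcal{Z}(x)\end{bmatrix}\in\mathbb{R}^N$, $\mathcal{Z}:\mathbb{R}^n\to\mathbb{R}^{N-n}$, state set $X\subset\mathbb{R}^n$, initial set $X_{\mathcal I}\subset X$, unsafe set $X_{\mathcal U}\subset X$. Let $\mathcal{U}_0=[u(0),\dots,u(T-1)]$, $\mathcal{X}_1=[x(1),\dots,x(T)]$ and $\mathcal{M}_0=[M(x(0)),\dots,M(x(T-1))]\in\mathbb{R}^{N\times T}$ be built from a single trajectory $x(t+1)=AM(x(t))+Bu(t)$. Let $Q=[Q_1~Q_2]$ with $Q_1\in\mathbb{R}^{T\times n}$, $Q_2\in\mathbb{R}^{T\times(N-n)}$ and suppose $\mathcal{X}_1Q_2=\mathbf{0}_{n\times(N-n)}$. Suppose there exist a symmetric positive-definite $P\in\mathbb{R}^{n\times n}$ and $H\in\mathbb{R}^{T\times n}$ with $Q_1=HP$, and constants $\gamma,\lambda\in\mathbb{R}_{\ge0}$ with $\lambda>\gamma$, such that (i) $\mathcal{M}_0Q_2=\begin{bmatrix}\mathbf{0}_{n\times(N-n)}\\ \mathbb{I}_{N-n}\end{bmatrix}$; (ii) $\mathcal{M}_0H=\begin{bmatrix}P^{-1}\\ \mathbf{0}_{(N-n)\times n}\end{bmatrix}$; (iii) $x^\top Px\le\gamma$ for all $x\in X_{\mathcal I}$; (iv) $x^\top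 Px\ge\lambda$ for all $x\in X_{\mathcal U}$; (v) $\begin{bmatrix}P^{-1} & \mathcal{X}_1H\\ H^\top\mathcal{X}_1^\top & P^{-1}\end{bmatrix}\succeq0$. Then $\mathcal{B}(x)=x^\top Px$ is a (conventional, $k=1$) control barrier certificate and $u=\mathcal{U}_0QM(x)$ is a corresponding safety controller; that is, $\mathcal{B}\le\gamma$ on $X_{\mathcal I}$, $\mathcal{B}\ge\lambda$ on $X_{\mathcal U}$, and for all $x\in X$, with $x^+=AM(x)+B\,\mathcal{U}_0QM(x)$, $\mathcal{B}(x^+)\le\mathcal{B}(x)$.
   Context: $\mathbb{I}_{N-n}$ denotes the identity and $\mathbf{0}$ zero matrices of the indicated sizes; $\succeq0$ means positive semidefinite. A control barrier certificate (CBC) is a function $\mathcal{B}:X\to\mathbb{R}_{\ge0}$ with $\gamma,\lambda\ge0$, $\lambda>\gamma$, such that $\mathcal{B}\le\gamma$ on $X_{\mathcal I}$, $\mathcal{B}\ge\lambda$ on $X_{\mathcal U}$, and for all $x\in X$ there is an input with $\mathcal{B}(x^+)\le\mathcal{B}(x)$; a feedback realizing this is a safety controller. *)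

theory Defs
  imports "HOL-Analysis.Analysis"
begin

text \<open>Lifting map M(x) = [x; Z(x)] in R^N, indexed by the sum type 'n + 'k (N = n + (N-n)).\<close>
definition liftM :: "(real^'n \<Rightarrow> real^'k) \<Rightarrow> real^'n \<Rightarrow> real^('n + 'k)" where
  "liftM Z x = (\<chi> r. case r of Inl i \<Rightarrow> x $ i | Inr j \<Rightarrow> Z x $ j)"

definition sym_pos_def :: "real^'n^'n \<Rightarrow> bool" where
  "sym_pos_def P \<longleftrightarrow> transpose P = P \<and> (\<forall>x. x \<noteq> 0 \<longrightarrow> 0 < x \<bullet> (P *v x))"

definition psd :: "real^'n^'n \<Rightarrow> bool" where
  "psd K \<longleftrightarrow> transpose K = K \<and> (\<forall>v. 0 \<le> v \<bullet> (K *v v))"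

definition block2 :: "real^'b^'a \<Rightarrow> real^'d^'a \<Rightarrow> real^'b^'c \<Rightarrow> real^'d^'c \<Rightarrow> real^('b+'d)^('a+'c)" where
  "block2 K11 K12 K21 K22 = (\<chi> r c. case r of
      Inl i \<Rightarrow> (case c of Inl j \<Rightarrow> K11 $ i $ j | Inr j \<Rightarrow> K12 $ i $ j)
    | Inr i \<Rightarrow> (case c of Inl j \<Rightarrow> K21 $ i $ j | Inr j \<Rightarrow> K22 $ i $ j))"

definition cbc_with_controller ::
  "'x set \<Rightarrow> 'x set \<Rightarrow> 'x set \<Rightarrow> ('x \<Rightarrow> 'u \<Rightarrow> 'x) \<Rightarrow> ('x \<Rightarrow> real) \<Rightarrow> real \<Rightarrow> real \<Rightarrow> ('x \<Rightarrow> 'u) \<Rightarrow> bool" where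
  "cbc_with_controller X XI XU f Bc gam lam ctrl \<longleftrightarrow>
     (\<forall>x\<in>X. 0 \<le> Bc x) \<and> 0 \<le> gam \<and> 0 \<le> lam \<and> gam < lam \<and>
     (\<forall>x\<in>XI. Bc x \<le> gam) \<and> (\<forall>x\<in>XU. lam \<le> Bc x) \<and>
     (\<forall>x\<in>X. Bc (f x (ctrl x)) \<le> Bc x)"

end

theory Submission imports Defs begin

lemma sum_UNIV_Plus:
  "sum f (UNIV :: ('a::finite + 'b::finite) set) = (\<Sum>i\<in>UNIV. f (Inl i)) + (\<Sum>j\<in>UNIV. f (Inr j))"
  by (subst UNIV_Plus_UNIV[symmetric], subst sum.Plus) (auto simp: o_def)

lemma dot_transpose: "(A *v (a::real^'n)) \<bullet> b = a \<bullet> (transpose A *v b)"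
  by (metis dot_lmul_matrix vector_transpose_matrix transpose_transpose)

lemma block2_quad:
  fixes K11 :: "real^'b^'a" and K12 :: "real^'d^'a" and K21 :: "real^'b^'c" and K22 :: "real^'d^'c"
  and a :: "real^'a" and b :: "real^'c" and a' :: "real^'b" and b' :: "real^'d"
  defines "v \<equiv> (\<chi> r. case r of Inl i \<Rightarrow> a $ i | Inr j \<Rightarrow> b $ j) :: real^('a+'c)"
  and "w \<equiv> (\<chi> r. case r of Inl i \<Rightarrow> a' $ i | Inr j \<Rightarrow> b' $ j) :: real^('b+'d)"
  shows "v \<bullet> (block2 K11 K12 K21 K22 *v w) = a \<bullet> (K11 *v a') + a \<bullet> (K12 *v b') + b \<bullet> (K21 *v a') + b \<bullet> (K22 *v b')"
  by (simp add: v_def w_def block2_def inner_vec_def matrix_vector_mult_def sum_UNIV_Plus sum.distrib algebra_simps)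

lemma mvm_neg: "(M::real^'a^'b) *v (- x) = - (M *v x)"
  by (simp add: vec_eq_iff matrix_vector_mult_def sum_negf)

lemma sym_pos_inv:
  assumes "sym_pos_def (P::real^'n^'n)"
  shows "P ** matrix_inv P = mat 1" "matrix_inv P ** P = mat 1"
proof -
  have "inj ((*v) P)"
  proof (rule injI)
    fix a b assume "P *v a = P *v b"
    hence "P *v (a - b) = 0" by (simp add: matrix_vector_mult_diff_distrib)
    hence "(a - b) \<bullet> (P *v (a - b)) = 0" by simp
    hence "a - b = 0" using assms unfolding sym_pos_def_def by (metis less_irrefl)
    thus "a = b" by simp
  qed
  hence "invertible P" using matrix_left_invertible_injective invertible_left_inverse by blast
  then have "\<exists>A'. P ** A' = mat 1 \<and> A' ** P = mat 1" unfolding invertible_def .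
  then have "P ** matrix_inv P = mat 1 \<and> matrix_inv P ** P = mat 1"
    unfolding matrix_inv_def by (rule someI_ex)
  thus "P ** matrix_inv P = mat 1" "matrix_inv P ** P = mat 1" by auto
qed
theorem corollary1:
  fixes A :: "real^('n::finite + 'k::finite)^'n" and B :: "real^('m::finite)^'n"
    and Z :: "real^'n \<Rightarrow> real^'k"
    and X XI XU :: "(real^'n) set"
    and x :: "nat \<Rightarrow> real^'n" and u :: "nat \<Rightarrow> real^'m"
    and \<tau> :: "'T::finite \<Rightarrow> nat"
    and U0 :: "real^'T^'m" and X1 :: "real^'T^'n" and M0 :: "real^'T^('n + 'k)"
    and Q :: "real^('n + 'k)^'T" and Q1 :: "real^'n^'T" and Q2 :: "real^'k^'T"
    and P :: "real^'n^'n" and H :: "real^'n^'T"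
    and gam lam :: real
  assumes XI: "XI \<subseteq> X" and XU: "XU \<subseteq> X"
    and tau: "bij_betw \<tau> UNIV {..<CARD('T)}"
    and traj: "\<And>t. t < CARD('T) \<Longrightarrow> x (Suc t) = A *v liftM Z (x t) + B *v u t"
    and U0_def: "U0 = (\<chi> i s. u (\<tau> s) $ i)"
    and X1_def: "X1 = (\<chi> i s. x (Suc (\<tau> s)) $ i)"
    and M0_def: "M0 = (\<chi> r s. liftM Z (x (\<tau> s)) $ r)"
    and Q_def: "Q = (\<chi> s c. case c of Inl j \<Rightarrow> Q1 $ s $ j | Inr j \<Rightarrow> Q2 $ s $ j)"
    and X1Q2: "X1 ** Q2 = 0"
    and P_pd: "sym_pos_def P"
    and Q1_HP: "Q1 = H ** P"
    and gl: "0 \<le> gam" "0 \<le> lam" "gam < lam"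
    and c1: "M0 ** Q2 = (\<chi> r c. case r of Inl i \<Rightarrow> 0 | Inr i \<Rightarrow> (if i = c then 1 else 0))"
    and c2: "M0 ** H = (\<chi> r c. case r of Inl i \<Rightarrow> matrix_inv P $ i $ c | Inr i \<Rightarrow> 0)"
    and c3: "\<forall>y\<in>XI. y \<bullet> (P *v y) \<le> gam"
    and c4: "\<forall>y\<in>XU. lam \<le> y \<bullet> (P *v y)"
    and c5: "psd (block2 (matrix_inv P) (X1 ** H) (transpose (X1 ** H)) (matrix_inv P))"
  shows "cbc_with_controller X XI XU (\<lambda>y v. A *v liftM Z y + B *v v)
           (\<lambda>y. y \<bullet> (P *v y)) gam lam (\<lambda>y. U0 ** Q *v liftM Z y)"
proof -
  define Pi where "Pi = matrix_inv P"
  define G where "G = X1 ** H"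
  have PPi: "P ** Pi = mat 1" and PiP: "Pi ** P = mat 1" using sym_pos_inv[OF P_pd] by (auto simp: Pi_def)
  have Psym: "transpose P = P" using P_pd by (simp add: sym_pos_def_def)
  have Pnn: "0 \<le> y \<bullet> (P *v y)" for y
    using P_pd unfolding sym_pos_def_def by (cases "y = 0") (auto intro: less_imp_le)
  have tlt: "\<tau> s < CARD('T)" for s using tau by (auto simp: bij_betw_def)
  have X1eq: "X1 = A ** M0 + B ** U0"
    by (simp add: vec_eq_iff X1_def M0_def U0_def matrix_matrix_mult_def traj[OF tlt]
        matrix_vector_mult_def)
  have MQ: "M0 ** Q = mat 1"
  proof -
    have "(M0 ** Q) $ r $ c = mat 1 $ r $ c" for r c
    proof (cases c)
      case (Inl j)
      have "(M0 ** Q) $ r $ c = ((M0 ** H) ** P) $ r $ j"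
        by (simp add: Inl Q_def Q1_HP matrix_mul_assoc[symmetric]) (simp add: matrix_matrix_mult_def Q1_HP)
      also have "\<dots> = mat 1 $ r $ c"
      proof (cases r)
        case (Inl i)
        have "((M0 ** H) ** P) $ r $ j = (Pi ** P) $ i $ j"
          unfolding c2 by (simp add: Inl matrix_matrix_mult_def Pi_def)
        then show ?thesis using PiP by (simp add: Inl \<open>c = Inl j\<close> mat_def)
      next
        case (Inr i)
        then show ?thesis unfolding c2 by (simp add: matrix_matrix_mult_def \<open>c = Inl j\<close> mat_def)
      qed
      finally show ?thesis .
    next
      case (Inr j)
      have "(M0 ** Q) $ r $ c = (M0 ** Q2) $ r $ j"
        by (simp add: Inr Q_def matrix_matrix_mult_def)
      then show ?thesis by (cases r) (auto simp: c1 Inr mat_def)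
    qed
    then show ?thesis by (simp add: vec_eq_iff)
  qed
  have Qm: "Q *v liftM Z y = Q1 *v y + Q2 *v Z y" for y
    by (simp add: vec_eq_iff Q_def liftM_def matrix_vector_mult_def sum_UNIV_Plus)
  have step: "A *v liftM Z y + B *v (U0 ** Q *v liftM Z y) = G *v (P *v y)" for y
  proof -
    let ?m = "liftM Z y"
    have "X1 *v (Q *v ?m) = A *v (M0 *v (Q *v ?m)) + B *v (U0 *v (Q *v ?m))"
      by (simp only: X1eq matrix_vector_mult_add_rdistrib matrix_vector_mul_assoc[symmetric])
    also have "M0 *v (Q *v ?m) = ?m" by (simp add: matrix_vector_mul_assoc MQ)
    finally have 1: "A *v ?m + B *v (U0 ** Q *v ?m) = X1 *v (Q *v ?m)"
      by (simp add: matrix_vector_mul_assoc)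
    have "X1 *v (Q *v ?m) = (X1 ** Q1) *v y + (X1 ** Q2) *v Z y"
      by (simp add: Qm matrix_vector_right_distrib matrix_vector_mul_assoc)
    also have "\<dots> = G *v (P *v y)"
      by (simp add: X1Q2 Q1_HP G_def matrix_vector_mul_assoc matrix_mul_assoc)
    finally show ?thesis using 1 by simp
  qed
  have dec: "(G *v (P *v y)) \<bullet> (P *v (G *v (P *v y))) \<le> y \<bullet> (P *v y)" for y
  proof -
    define z where "z = P *v y"
    define w where "w = G *v z"
    define a where "a = - (P *v w)"
    define v where "v = ((\<chi> r. case r of Inl i \<Rightarrow> a $ i | Inr j \<Rightarrow> z $ j) :: real^('n+'n))"
    have "0 \<le> v \<bullet> (block2 Pi G (transpose G) Pi *v v)"
      using c5 unfolding psd_def Pi_def G_def by blast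
    also have "\<dots> = a \<bullet> (Pi *v a) + a \<bullet> (G *v z) + z \<bullet> (transpose G *v a) + z \<bullet> (Pi *v z)"
      unfolding v_def by (rule block2_quad)
    also have "a \<bullet> (Pi *v a) = w \<bullet> (P *v w)"
    proof -
      have "Pi *v a = - w" by (simp add: a_def mvm_neg matrix_vector_mul_assoc PiP)
      then show ?thesis by (simp add: a_def dot_transpose Psym)
    qed
    also have "a \<bullet> (G *v z) = - (w \<bullet> (P *v w))"
      unfolding a_def w_def by (simp add: inner_commute)
    also have "z \<bullet> (transpose G *v a) = - (w \<bullet> (P *v w))"
      unfolding a_def w_def
      by (metis dot_transpose transpose_transpose inner_commute inner_minus_right)
    also have "z \<bullet> (Pi *v z) = y \<bullet> (P *v y)"
      unfolding z_def
      by (simp add: matrix_vector_mul_assoc PiP dot_transpose Psym inner_commute)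
    finally show ?thesis unfolding w_def z_def by simp
  qed
  show ?thesis
    unfolding cbc_with_controller_def
    using gl c3 c4 Pnn dec step by simp
qed
end
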